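(* Assume that $(XX^T)^{-1}$ and $(X\Sigma^{-1}X^T)^{-1}$ exist with probability $1$ and that their expectations over $X$ exist. Then $b^w_l\le b^w_u$ and $v^w_l\ge v^w_u$.
   Context: Let $p>n$. The rows $x_1,\dots,x_n$ of $X\in\mathbb{R}^{n\times p}$ are i.i.d. from a distribution $P_x$ on $\mathbb{R}^p$ with $\mathbb{E}[x]=0$ and positive definite covariance $\Sigma=\mathrm{Var}(x)$, which is known. The responses are $Y=Xw+\epsilon$, where: - $w\in\mathbb{R}^p$ is random, independent of $X$, with $\mathbb{E}[w]=0$ and $\mathbb{E}[ww^T]=\tau^2I_p$; - $\epsilon\in\mathbb{R}^n$ has i.i.d. mean-zero entries of variance $\sigma^2$, independent of $(X,w)$. Define: - $b^w_l=\mathrm{tr}\big(\Sigma-\Sigma\mathbb{E}_X[X^T(XX^T)^{-1}X]\big)$; - $v^w_l=\mathrm{tr}\big(\Sigma\mathbb{E}_X[X^T(XX^T)^{-2}X]\big)$; - $b^w_u=\mathrm{tr}\big(\Sigma-\mathbb{E}_X[X^T(X\Sigma^{-1}X^T)^{-1}X]\big)$; - $v^w_u=\mathrm{tr}\big(\mathbb{E}_X[(X\Sigma^{-1}X^T)^{-1}]\big)$. These are the bias and variance coefficients (bias $\tau^2b$, variance $\sigma^2v$) of the reducible errors of, respectively, the minimum-norm interpolator $\hat w=X^T(XX^T)^{-1}Y$ and the minimum-variance interpolator $\tilde w=\Sigma^{-1}X^T(X\Sigma^{-1}X^T)^{-1}Y$. *)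

theory Defs
  imports "HOL-Probability.Probability"
begin

definition outer :: "real^'p \<Rightarrow> real^'p^'p" where
  "outer x = (\<chi> i j. x $ i * x $ j)"

definition pos_def_mat :: "real^'p^'p \<Rightarrow> bool" where
  "pos_def_mat S \<longleftrightarrow> transpose S = S \<and> (\<forall>v. v \<noteq> 0 \<longrightarrow> v \<bullet> (S *v v) > 0)"

text \<open>Bias/variance coefficients. M is the underlying probability space, X the random
  n x p design matrix (rows indexed by 'n), S the covariance Sigma; E_X is the integral over M.\<close>

definition b_wl :: "'w measure \<Rightarrow> ('w \<Rightarrow> real^'p^'n) \<Rightarrow> real^'p^'p \<Rightarrow> real" where
  "b_wl M X S = trace (S - S ** (\<integral>\<omega>. transpose (X \<omega>) ** matrix_inv (X \<omega> ** transpose (X \<omega>)) ** X \<omega> \<partial>M))"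

definition v_wl :: "'w measure \<Rightarrow> ('w \<Rightarrow> real^'p^'n) \<Rightarrow> real^'p^'p \<Rightarrow> real" where
  "v_wl M X S = trace (S ** (\<integral>\<omega>. transpose (X \<omega>) ** (matrix_inv (X \<omega> ** transpose (X \<omega>))
                    ** matrix_inv (X \<omega> ** transpose (X \<omega>))) ** X \<omega> \<partial>M))"

definition b_wu :: "'w measure \<Rightarrow> ('w \<Rightarrow> real^'p^'n) \<Rightarrow> real^'p^'p \<Rightarrow> real" where
  "b_wu M X S = trace (S - (\<integral>\<omega>. transpose (X \<omega>) ** matrix_inv (X \<omega> ** matrix_inv S ** transpose (X \<omega>)) ** X \<omega> \<partial>M))"

definition v_wu :: "'w measure \<Rightarrow> ('w \<Rightarrow> real^'p^'n) \<Rightarrow> real^'p^'p \<Rightarrow> real" where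
  "v_wu M X S = trace (\<integral>\<omega>. matrix_inv (X \<omega> ** matrix_inv S ** transpose (X \<omega>)) \<partial>M)"

end

theory Submission
  imports Defs
begin


lemma cont_mm: "continuous_on UNIV (\<lambda>x. fst x ** (snd x :: real^'c^'b) :: real^'c^'a)"
  unfolding matrix_matrix_mult_def by (intro continuous_intros)

lemma meas_mm[measurable]: fixes f :: "'w \<Rightarrow> real^'b^'a" and g :: "'w \<Rightarrow> real^'c^'b"
  assumes "f \<in> borel_measurable M" "g \<in> borel_measurable M"
  shows "(\<lambda>x. f x ** g x) \<in> borel_measurable M"
  using borel_measurable_continuous_Pair[OF assms cont_mm] by simp

lemma meas_tr[measurable]: fixes f :: "'w \<Rightarrow> real^'b^'a"
  assumes "f \<in> borel_measurable M"
  shows "(\<lambda>x. transpose (f x)) \<in> borel_measurable M"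
proof -
  have "continuous_on UNIV (\<lambda>x::real^'b^'a. transpose x)"
    unfolding transpose_def by (intro continuous_intros)
  then show ?thesis using borel_measurable_continuous_on[OF _ assms] by blast
qed

lemma bl_trace: "bounded_linear (\<lambda>A::real^'n^'n. trace A)"
  unfolding trace_def by (intro bounded_linear_sum bounded_linear_compose[OF bounded_linear_vec_nth] bounded_linear_vec_nth)

lemma bl_trace_mul: "bounded_linear (\<lambda>A::real^'n^'n. trace (S ** A))"
proof -
  have "linear (\<lambda>A::real^'n^'n. trace (S ** A))"
    by (rule linearI) (simp_all add: matrix_add_ldistrib trace_add trace_def matrix_matrix_mult_def sum_distrib_left algebra_simps sum.distrib)
  then show ?thesis using linear_conv_bounded_linear by blast
qed



lemma minv: fixes A :: "real^'n^'n" assumes "invertible A"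
  shows "A ** matrix_inv A = mat 1" "matrix_inv A ** A = mat 1"
  using someI_ex[OF assms[unfolded invertible_def]] unfolding matrix_inv_def by auto

lemma minv_unique: fixes A B :: "real^'n^'n" assumes "A ** B = mat 1"
  shows "matrix_inv A = B"
proof -
  have i: "invertible A" using assms invertible_right_inverse by blast
  have "matrix_inv A = matrix_inv A ** (A ** B)" using assms by simp
  also have "\<dots> = B" by (simp add: matrix_mul_assoc minv[OF i])
  finally show ?thesis .
qed

lemma minv_sym: fixes A :: "real^'n^'n" assumes "invertible A" "transpose A = A"
  shows "transpose (matrix_inv A) = matrix_inv A"
proof -
  have "transpose (matrix_inv A) ** A = mat 1"
    using minv(1)[OF assms(1)] assms(2) by (metis matrix_transpose_mul transpose_mat)
  then have "A ** transpose (matrix_inv A) = mat 1" using matrix_left_right_inverse by blast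
  then show ?thesis using minv_unique by metis
qed

lemma mm_add_r: "((A::real^'b^'a) + B) ** (C::real^'c^'b) = A ** C + B ** C"
  by (simp add: matrix_matrix_mult_def vec_eq_iff algebra_simps sum.distrib)
lemma mm_sub_r: "((A::real^'b^'a) - B) ** (C::real^'c^'b) = A ** C - B ** C"
  by (simp add: matrix_matrix_mult_def vec_eq_iff algebra_simps sum_subtractf)
lemma mm_sub_l: "(C::real^'b^'a) ** ((A::real^'c^'b) - B) = C ** A - C ** B"
  by (simp add: matrix_matrix_mult_def vec_eq_iff algebra_simps sum_subtractf)
lemma tr_sub: "transpose ((A::real^'b^'a) - B) = transpose A - transpose B"
  by (simp add: transpose_def vec_eq_iff)
lemma mm_zero_r: "(A::real^'b^'a) ** (0::real^'c^'b) = 0"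
  by (simp add: matrix_matrix_mult_def vec_eq_iff)
lemma mm_zero_l: "(0::real^'b^'a) ** (A::real^'c^'b) = 0"
  by (simp add: matrix_matrix_mult_def vec_eq_iff)

definition psd :: "real^'n^'n \<Rightarrow> bool" where
  "psd M \<longleftrightarrow> transpose M = M \<and> (\<forall>v. 0 \<le> v \<bullet> (M *v v))"

lemma psd_congr: assumes "psd M" shows "psd (transpose A ** M ** A)"
proof -
  have "v \<bullet> ((transpose A ** M ** A) *v v) = (A *v v) \<bullet> (M *v (A *v v))" for v
  proof -
    have "v \<bullet> ((transpose A ** M ** A) *v v) = v \<bullet> (transpose A *v (M *v (A *v v)))"
      by (simp only: matrix_vector_mul_assoc matrix_mul_assoc)
    also have "\<dots> = ((M *v (A *v v)) v* A) \<bullet> v" by (simp add: inner_commute)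
    also have "\<dots> = (M *v (A *v v)) \<bullet> (A *v v)" by (rule dot_lmul_matrix)
    finally show ?thesis by (simp add: inner_commute)
  qed
  moreover have "transpose (transpose A ** M ** A) = transpose A ** M ** A"
    using assms unfolding psd_def by (simp add: matrix_transpose_mul matrix_mul_assoc)
  ultimately show ?thesis using assms unfolding psd_def by simp
qed

lemma psd_inv: assumes "psd M" "invertible M" shows "psd (matrix_inv M)"
proof -
  have s: "transpose (matrix_inv M) = matrix_inv M" using minv_sym assms unfolding psd_def by blast
  have "matrix_inv M = transpose (matrix_inv M) ** M ** matrix_inv M"
    by (simp add: s minv[OF assms(2)] matrix_mul_assoc[symmetric])
  then show ?thesis using psd_congr[OF assms(1)] by metis
qed

lemma quad_form: "v \<bullet> ((M::real^'n^'n) *v v) = (\<Sum>i\<in>UNIV. \<Sum>j\<in>UNIV. v$i * M$i$j * v$j)"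
  by (simp add: inner_vec_def matrix_vector_mult_def sum_distrib_left algebra_simps)

lemma ax_form: "axis i 1 \<bullet> ((M::real^'n^'n) *v axis j 1) = M$i$j"
proof -
  have "axis i 1 \<bullet> ((M::real^'n^'n) *v axis j 1) = (\<Sum>k\<in>UNIV. (if k = i then M$k$j else 0))"
    unfolding inner_vec_def matrix_vector_mult_def axis_def
    by (intro sum.cong) (auto simp: if_distrib sum.delta cong: if_cong)
  then show ?thesis by simp
qed

lemma psd_diag: assumes "psd M" shows "0 \<le> M$i$i"
proof -
  have "0 \<le> (axis i 1) \<bullet> (M *v axis i 1)" using assms unfolding psd_def by blast
  also have "\<dots> = M$i$i" by (rule ax_form)
  finally show ?thesis .
qed

lemma psd_trace_nonneg: assumes "psd M" shows "0 \<le> trace M"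
  unfolding trace_def using psd_diag[OF assms] by (simp add: sum_nonneg)

lemma psd_diag_le_trace: assumes "psd M" shows "M$i$i \<le> trace M"
  unfolding trace_def using psd_diag[OF assms]
  by (intro member_le_sum) auto

lemma psd_entry: assumes "psd M" shows "\<bar>M$i$j\<bar> \<le> trace M"
proof (cases "i = j")
  case True then show ?thesis using psd_diag[OF assms, of j] psd_diag_le_trace[OF assms, of j] by simp
next
  case False
  have sym: "M$j$i = M$i$j" using assms unfolding psd_def by (metis transpose_def vec_lambda_beta)
  define u where "u = axis i (1::real) + axis j 1"
  define w where "w = axis i (1::real) - axis j 1"
  have "0 \<le> u \<bullet> (M *v u)" "0 \<le> w \<bullet> (M *v w)" using assms unfolding psd_def by blast+
  moreover have "u \<bullet> (M *v u) = M$i$i + M$j$j + 2 * M$i$j"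
    unfolding u_def using sym by (simp add: algebra_simps inner_add_left inner_add_right ax_form)
  moreover have "w \<bullet> (M *v w) = M$i$i + M$j$j - 2 * M$i$j"
    unfolding w_def using sym by (simp add: algebra_simps inner_diff_left inner_diff_right ax_form)
  moreover have "M$i$i + M$j$j \<le> trace M"
  proof -
    have "M$i$i + M$j$j = (\<Sum>k\<in>{i,j}. M$k$k)" using False by simp
    also have "\<dots> \<le> trace M" unfolding trace_def using psd_diag[OF assms]
      by (intro sum_mono2) auto
    finally show ?thesis .
  qed
  ultimately show ?thesis by linarith
qed



lemma pointwise:
  fixes X :: "real^'p^'n" and S :: "real^'p^'p"
  assumes Spsd: "psd S" and Sinv: "invertible S"
    and iB: "invertible (X ** transpose X)"
    and iC: "invertible (X ** matrix_inv S ** transpose X)"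
  shows "trace (transpose X ** matrix_inv (X ** matrix_inv S ** transpose X) ** X)
          \<le> trace (S ** (transpose X ** matrix_inv (X ** transpose X) ** X))"
    and "trace (matrix_inv (X ** matrix_inv S ** transpose X))
          \<le> trace (S ** (transpose X ** (matrix_inv (X ** transpose X) ** matrix_inv (X ** transpose X)) ** X))"
    and "psd (transpose X ** matrix_inv (X ** matrix_inv S ** transpose X) ** X)"
    and "trace (transpose X ** matrix_inv (X ** matrix_inv S ** transpose X) ** X) \<le> trace S"
    and "psd (transpose X ** matrix_inv (X ** transpose X) ** X)"
    and "trace (transpose X ** matrix_inv (X ** transpose X) ** X) = real CARD('n)"
    and "psd (transpose X ** (matrix_inv (X ** transpose X) ** matrix_inv (X ** transpose X)) ** X)"
    and "trace (transpose X ** (matrix_inv (X ** transpose X) ** matrix_inv (X ** transpose X)) ** X)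
          = trace (matrix_inv (X ** transpose X))"
proof -
  define Si where "Si = matrix_inv S"
  define Bi where "Bi = matrix_inv (X ** transpose X)"
  define Ci where "Ci = matrix_inv (X ** Si ** transpose X)"
  define Xt where "Xt = transpose X"
  have sS: "transpose S = S" using Spsd unfolding psd_def by blast
  have sSi: "transpose Si = Si" unfolding Si_def using minv_sym[OF Sinv sS] .
  have psdSi: "psd Si" unfolding Si_def using psd_inv[OF Spsd Sinv] .
  have sB: "transpose (X ** transpose X) = X ** transpose X" by (simp add: matrix_transpose_mul)
  have sBi: "transpose Bi = Bi" unfolding Bi_def using minv_sym[OF iB sB] .
  have sC: "transpose (X ** Si ** transpose X) = X ** Si ** transpose X"
    by (simp add: matrix_transpose_mul sSi matrix_mul_assoc)
  have iC': "invertible (X ** Si ** transpose X)" using iC unfolding Si_def .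
  have sCi: "transpose Ci = Ci" unfolding Ci_def using minv_sym[OF iC' sC] .
  have psdB: "psd (X ** transpose X)"
    using psd_congr[of "mat 1 :: real^'p^'p" "transpose X"]
    by (simp add: psd_def)
  have psdBi: "psd Bi" unfolding Bi_def using psd_inv[OF psdB iB] .
  have psdC: "psd (X ** Si ** transpose X)"
    using psd_congr[OF psdSi, of "transpose X"] by simp
  have psdCi: "psd Ci" unfolding Ci_def using psd_inv[OF psdC iC'] .
  have k1: "Bi ** X ** Xt = mat 1" unfolding Bi_def Xt_def using minv(2)[OF iB] by (simp add: matrix_mul_assoc)
  have k2: "X ** Xt ** Bi = mat 1" unfolding Bi_def Xt_def using minv(1)[OF iB] by (simp add: matrix_mul_assoc)
  have k3: "Ci ** X ** Si ** Xt = mat 1" unfolding Ci_def Xt_def using minv(2)[OF iC'] by (simp add: matrix_mul_assoc)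
  have k4: "X ** Si ** Xt ** Ci = mat 1" unfolding Ci_def Xt_def using minv(1)[OF iC'] by (simp add: matrix_mul_assoc)
  have k5: "Si ** S = mat 1" "S ** Si = mat 1" unfolding Si_def using minv[OF Sinv] by auto
  have z1: "Z ** Bi ** X ** Xt = Z" for Z :: "real^'n^'c" by (metis matrix_mul_assoc matrix_mul_rid k1)
  have z2: "Z ** X ** Xt ** Bi = Z" for Z :: "real^'n^'c" by (metis matrix_mul_assoc matrix_mul_rid k2)
  have z3: "Z ** Ci ** X ** Si ** Xt = Z" for Z :: "real^'n^'c" by (metis matrix_mul_assoc matrix_mul_rid k3)
  have z4: "Z ** X ** Si ** Xt ** Ci = Z" for Z :: "real^'n^'c" by (metis matrix_mul_assoc matrix_mul_rid k4)
  have z5: "Z ** Si ** S = Z" "Z ** S ** Si = Z" for Z :: "real^'p^'c" by (metis matrix_mul_assoc matrix_mul_rid k5)+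
  note ids = k1 k2 k3 k4 k5 z1 z2 z3 z4 z5
  define P where "P = Xt ** Bi ** X"
  define Q where "Q = Xt ** Ci ** X"
  have tP: "transpose P = P" unfolding P_def Xt_def by (simp add: matrix_transpose_mul sBi matrix_mul_assoc)
  have tQ: "transpose Q = Q" unfolding Q_def Xt_def by (simp add: matrix_transpose_mul sCi matrix_mul_assoc)
  define F where "F = P - Si ** Q"
  have tF: "transpose F = P - Q ** Si" unfolding F_def by (simp add: tr_sub matrix_transpose_mul tP tQ sSi)
  have eF: "transpose F ** S ** F = P ** S ** P - Q"
    unfolding tF unfolding F_def
    by (simp add: mm_sub_r mm_sub_l matrix_mul_assoc ids P_def Q_def)
  have PP: "P ** P = P" unfolding P_def by (simp add: matrix_mul_assoc ids)
  have "trace (P ** S ** P) = trace (S ** P)"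
    by (metis PP matrix_mul_assoc trace_mul_sym)
  moreover have "0 \<le> trace (transpose F ** S ** F)" using psd_trace_nonneg[OF psd_congr[OF Spsd]] .
  ultimately have b: "trace Q \<le> trace (S ** P)" using eF by (simp add: trace_sub)
  then show "trace (transpose X ** matrix_inv (X ** matrix_inv S ** transpose X) ** X)
          \<le> trace (S ** (transpose X ** matrix_inv (X ** transpose X) ** X))"
    unfolding P_def Q_def Xt_def Ci_def Bi_def Si_def .
  have psdQ: "psd Q" unfolding Q_def Xt_def using psd_congr[OF psdCi, of X] .
  then show "psd (transpose X ** matrix_inv (X ** matrix_inv S ** transpose X) ** X)"
    unfolding Q_def Xt_def Ci_def Si_def .
  define E where "E = mat 1 - Si ** Q"
  have tE: "transpose E = mat 1 - Q ** Si" unfolding E_def by (simp add: tr_sub matrix_transpose_mul tQ sSi)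
  have eE: "transpose E ** S ** E = S - Q"
    unfolding tE unfolding E_def
    by (simp add: mm_sub_r mm_sub_l matrix_mul_assoc ids Q_def)
  have "0 \<le> trace (transpose E ** S ** E)" using psd_trace_nonneg[OF psd_congr[OF Spsd]] .
  then have "trace Q \<le> trace S" using eE by (simp add: trace_sub)
  then show "trace (transpose X ** matrix_inv (X ** matrix_inv S ** transpose X) ** X) \<le> trace S"
    unfolding Q_def Xt_def Ci_def Si_def .
  have psdP: "psd P" unfolding P_def Xt_def using psd_congr[OF psdBi, of X] .
  then show "psd (transpose X ** matrix_inv (X ** transpose X) ** X)"
    unfolding P_def Xt_def Bi_def .
  have "trace P = trace (Bi ** X ** Xt)" unfolding P_def
    by (metis matrix_mul_assoc trace_mul_sym)
  then have "trace P = real CARD('n)" by (simp add: k1 trace_I)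
  then show "trace (transpose X ** matrix_inv (X ** transpose X) ** X) = real CARD('n)"
    unfolding P_def Xt_def Bi_def .
  define R where "R = Xt ** (Bi ** Bi) ** X"
  have R': "R = transpose (Bi ** X) ** mat 1 ** (Bi ** X)" unfolding R_def Xt_def
    by (simp add: matrix_transpose_mul sBi matrix_mul_assoc)
  have "psd (mat 1 :: real^'n^'n)" by (simp add: psd_def inner_ge_zero)
  then have "psd R" unfolding R' by (rule psd_congr)
  then show "psd (transpose X ** (matrix_inv (X ** transpose X) ** matrix_inv (X ** transpose X)) ** X)"
    unfolding R_def Xt_def Bi_def .
  have "trace R = trace (Bi ** (Bi ** X ** Xt))" unfolding R_def
    by (metis matrix_mul_assoc trace_mul_sym)
  then have "trace R = trace Bi" by (simp add: k1)
  then show "trace (transpose X ** (matrix_inv (X ** transpose X) ** matrix_inv (X ** transpose X)) ** X)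
          = trace (matrix_inv (X ** transpose X))" unfolding R_def Xt_def Bi_def .
  define D where "D = Xt ** Bi - Si ** Xt ** Ci"
  have tD: "transpose D = Bi ** X - Ci ** X ** Si" unfolding D_def Xt_def
    by (simp add: tr_sub matrix_transpose_mul sBi sCi sSi matrix_mul_assoc)
  have eD: "transpose D ** S ** D = Bi ** X ** S ** Xt ** Bi - Ci"
    unfolding tD unfolding D_def
    by (simp add: mm_sub_r mm_sub_l matrix_mul_assoc ids)
  have "0 \<le> trace (transpose D ** S ** D)" using psd_trace_nonneg[OF psd_congr[OF Spsd]] .
  then have "trace Ci \<le> trace (Bi ** X ** S ** Xt ** Bi)" using eD by (simp add: trace_sub)
  also have "trace (Bi ** X ** S ** Xt ** Bi) = trace (S ** R)" unfolding R_def
    by (metis matrix_mul_assoc trace_mul_sym)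
  finally show "trace (matrix_inv (X ** matrix_inv S ** transpose X))
          \<le> trace (S ** (transpose X ** (matrix_inv (X ** transpose X) ** matrix_inv (X ** transpose X)) ** X))"
    unfolding R_def Xt_def Ci_def Bi_def Si_def .
qed


lemma norm_mat_bound: fixes M :: "real^'a^'a"
  assumes "\<And>i j. \<bar>M$i$j\<bar> \<le> c"
  shows "norm M \<le> real CARD('a) * real CARD('a) * c"
proof -
  have "norm M \<le> (\<Sum>i\<in>UNIV. norm (M$i))" by (simp add: norm_vec_def L2_set_le_sum)
  also have "\<dots> \<le> (\<Sum>i\<in>UNIV. (\<Sum>j\<in>UNIV. \<bar>M$i$j\<bar>))" by (intro sum_mono norm_le_l1_cart)
  also have "\<dots> \<le> (\<Sum>i\<in>(UNIV::'a set). (\<Sum>j\<in>(UNIV::'a set). c))" by (intro sum_mono assms)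
  finally show ?thesis by simp
qed

lemma trace_le_norm: fixes M :: "real^'a^'a"
  shows "trace M \<le> real CARD('a) * norm M"
proof -
  have "trace M \<le> (\<Sum>i\<in>(UNIV::'a set). norm M)" unfolding trace_def
  proof (intro sum_mono)
    fix i
    have "\<bar>M$i$i\<bar> \<le> norm (M$i)" by (rule component_le_norm_cart)
    moreover have "norm (M$i) \<le> norm M" by (rule Finite_Cartesian_Product.norm_nth_le)
    ultimately show "M$i$i \<le> norm M" by linarith
  qed
  then show ?thesis by simp
qed

lemma psd_norm: fixes M :: "real^'a^'a" assumes "psd M" "trace M \<le> c"
  shows "norm M \<le> real CARD('a) * real CARD('a) * c"
proof (rule norm_mat_bound)
  fix i j show "\<bar>M$i$j\<bar> \<le> c" using psd_entry[OF assms(1), of i j] assms(2) by linarith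
qed

theorem proposition4:
  fixes M :: "'w measure"
    and Px :: "(real^'p) measure"
    and X :: "'w \<Rightarrow> real^'p^'n"
    and S :: "real^'p^'p"
  assumes prob: "prob_space M"
    and pn: "CARD('n) < CARD('p)"
    and Px_prob: "prob_space Px" and Px_sets: "sets Px = sets borel"
    and X_meas: "X \<in> borel_measurable M"
    and rows_indep: "prob_space.indep_vars M (\<lambda>_. borel) (\<lambda>i \<omega>. X \<omega> $ i) UNIV"
    and rows_distr: "\<And>i. distr M borel (\<lambda>\<omega>. X \<omega> $ i) = Px"
    and mean_int: "integrable Px (\<lambda>x. x)" and mean_zero: "(\<integral>x. x \<partial>Px) = 0"
    and cov_int: "integrable Px outer" and cov: "S = (\<integral>x. outer x \<partial>Px)"
    and S_pd: "pos_def_mat S"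
    and inv1: "AE \<omega> in M. invertible (X \<omega> ** transpose (X \<omega>))"
    and inv2: "AE \<omega> in M. invertible (X \<omega> ** matrix_inv S ** transpose (X \<omega>))"
    and int1: "integrable M (\<lambda>\<omega>. matrix_inv (X \<omega> ** transpose (X \<omega>)))"
    and int2: "integrable M (\<lambda>\<omega>. matrix_inv (X \<omega> ** matrix_inv S ** transpose (X \<omega>)))"
  shows "b_wl M X S \<le> b_wu M X S \<and> v_wl M X S \<ge> v_wu M X S"
  proof -
  interpret prob_space M by (rule prob)
  have sS: "transpose S = S" using S_pd unfolding pos_def_mat_def by blast
  have Spsd: "psd S" unfolding psd_def using S_pd unfolding pos_def_mat_def
    by (metis inner_zero_left less_eq_real_def order_refl)
  have "\<forall>x. S *v x = 0 \<longrightarrow> x = 0" using S_pd unfolding pos_def_mat_def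
    by (metis inner_zero_right less_irrefl)
  then have Sinv: "invertible S" using matrix_left_invertible_ker invertible_left_inverse by blast
  define fBi where "fBi = (\<lambda>\<omega>. matrix_inv (X \<omega> ** transpose (X \<omega>)))"
  define fCi where "fCi = (\<lambda>\<omega>. matrix_inv (X \<omega> ** matrix_inv S ** transpose (X \<omega>)))"
  define fP where "fP = (\<lambda>\<omega>. transpose (X \<omega>) ** matrix_inv (X \<omega> ** transpose (X \<omega>)) ** X \<omega>)"
  define fQ where "fQ = (\<lambda>\<omega>. transpose (X \<omega>) ** matrix_inv (X \<omega> ** matrix_inv S ** transpose (X \<omega>)) ** X \<omega>)"
  define fR where "fR = (\<lambda>\<omega>. transpose (X \<omega>) ** (matrix_inv (X \<omega> ** transpose (X \<omega>))
                    ** matrix_inv (X \<omega> ** transpose (X \<omega>))) ** X \<omega>)"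
  have mBi: "fBi \<in> borel_measurable M" using borel_measurable_integrable[OF int1] unfolding fBi_def .
  have mCi: "fCi \<in> borel_measurable M" using borel_measurable_integrable[OF int2] unfolding fCi_def .
  have mP: "fP \<in> borel_measurable M" unfolding fP_def
    by (intro meas_mm meas_tr X_meas mBi[unfolded fBi_def])
  have mQ: "fQ \<in> borel_measurable M" unfolding fQ_def
    by (intro meas_mm meas_tr X_meas mCi[unfolded fCi_def])
  have mR: "fR \<in> borel_measurable M" unfolding fR_def
    by (intro meas_mm meas_tr X_meas mBi[unfolded fBi_def])
  have AEpt: "AE \<omega> in M. invertible (X \<omega> ** transpose (X \<omega>)) \<and> invertible (X \<omega> ** matrix_inv S ** transpose (X \<omega>))"
    using inv1 inv2 by auto
  note pw = pointwise[OF Spsd Sinv]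
  have iP: "integrable M fP"
  proof (rule Bochner_Integration.integrable_bound[where f="\<lambda>_. (real CARD('p) * real CARD('p) * real CARD('n))", OF _ mP])
    show "integrable M (\<lambda>_. (real CARD('p) * real CARD('p) * real CARD('n)))" by simp
    show "AE x in M. norm (fP x) \<le> norm (real CARD('p) * real CARD('p) * real CARD('n))"
      using AEpt proof eventually_elim
      case (elim x)
      have "norm (fP x) \<le> real CARD('p) * real CARD('p) * real CARD('n)"
        unfolding fP_def using psd_norm[OF pw(5)[OF conjunct1[OF elim] conjunct2[OF elim]] eq_refl[OF pw(6)[OF conjunct1[OF elim] conjunct2[OF elim]]]] .
      then show ?case by simp
    qed
  qed
  have trS: "0 \<le> trace S" using psd_trace_nonneg[OF Spsd] .
  have iQ: "integrable M fQ"
  proof (rule Bochner_Integration.integrable_bound[where f="\<lambda>_. (real CARD('p) * real CARD('p) * trace S)", OF _ mQ])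
    show "integrable M (\<lambda>_. (real CARD('p) * real CARD('p) * trace S))" by simp
    show "AE x in M. norm (fQ x) \<le> norm (real CARD('p) * real CARD('p) * trace S)"
      using AEpt proof eventually_elim
      case (elim x)
      have "norm (fQ x) \<le> real CARD('p) * real CARD('p) * trace S"
        unfolding fQ_def using psd_norm[OF pw(3)[OF conjunct1[OF elim] conjunct2[OF elim]] pw(4)[OF conjunct1[OF elim] conjunct2[OF elim]]] .
      then show ?case using trS by simp
    qed
  qed
  have iR: "integrable M fR"
  proof (rule Bochner_Integration.integrable_bound[of _ "\<lambda>\<omega>. real CARD('p) * real CARD('p) * (real CARD('n) * norm (fBi \<omega>))"])
    show "integrable M (\<lambda>\<omega>. real CARD('p) * real CARD('p) * (real CARD('n) * norm (fBi \<omega>)))"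
      using int1 unfolding fBi_def by (intro integrable_mult_right integrable_norm)
    show "fR \<in> borel_measurable M" by (rule mR)
    show "AE x in M. norm (fR x) \<le> norm (real CARD('p) * real CARD('p) * (real CARD('n) * norm (fBi x)))"
      using AEpt proof eventually_elim
      case (elim x)
      have e1: "invertible (X x ** transpose (X x))" and e2: "invertible (X x ** matrix_inv S ** transpose (X x))"
        using elim by simp_all
      have "trace (fR x) \<le> real CARD('n) * norm (fBi x)"
        using pw(8)[OF e1 e2] trace_le_norm[of "fBi x"] unfolding fR_def fBi_def by linarith
      then have "norm (fR x) \<le> real CARD('p) * real CARD('p) * (real CARD('n) * norm (fBi x))"
        unfolding fR_def by (rule psd_norm[OF pw(7)[OF e1 e2]])
      then show ?case by simp
    qed
  qed
  have iCi: "integrable M fCi" using int2 unfolding fCi_def .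
  have b1: "b_wl M X S = trace S - (\<integral>\<omega>. trace (S ** fP \<omega>) \<partial>M)"
    unfolding b_wl_def trace_sub fP_def[symmetric]
    using integral_bounded_linear[OF bl_trace_mul iP, of S] by simp
  have b2: "b_wu M X S = trace S - (\<integral>\<omega>. trace (fQ \<omega>) \<partial>M)"
    unfolding b_wu_def trace_sub fQ_def[symmetric]
    using integral_bounded_linear[OF bl_trace iQ] by simp
  have v1: "v_wl M X S = (\<integral>\<omega>. trace (S ** fR \<omega>) \<partial>M)"
    unfolding v_wl_def fR_def[symmetric]
    using integral_bounded_linear[OF bl_trace_mul iR, of S] by simp
  have v2: "v_wu M X S = (\<integral>\<omega>. trace (fCi \<omega>) \<partial>M)"
    unfolding v_wu_def fCi_def[symmetric]
    using integral_bounded_linear[OF bl_trace iCi] by simp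
  have "(\<integral>\<omega>. trace (fQ \<omega>) \<partial>M) \<le> (\<integral>\<omega>. trace (S ** fP \<omega>) \<partial>M)"
  proof (rule integral_mono_AE[OF integrable_bounded_linear[OF bl_trace iQ]
        integrable_bounded_linear[OF bl_trace_mul iP]])
    show "AE x in M. trace (fQ x) \<le> trace (S ** fP x)"
      using AEpt unfolding fP_def fQ_def by eventually_elim (erule conjE, erule (1) pw(1))
  qed
  moreover have "(\<integral>\<omega>. trace (fCi \<omega>) \<partial>M) \<le> (\<integral>\<omega>. trace (S ** fR \<omega>) \<partial>M)"
  proof (rule integral_mono_AE[OF integrable_bounded_linear[OF bl_trace iCi]
        integrable_bounded_linear[OF bl_trace_mul iR]])
    show "AE x in M. trace (fCi x) \<le> trace (S ** fR x)"
      using AEpt unfolding fR_def fCi_def by eventually_elim (erule conjE, erule (1) pw(2))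
  qed
  ultimately show ?thesis unfolding b1 b2 v1 v2 by simp
qed

end
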